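(* Let $\mathcal{V}$ be a finite set of nodes, $\mathcal{P}$ a finite set of labels with $|\mathcal{P}|\ge 2$, $\mathcal{E}$ a set of unordered pairs of nodes, $\theta_{ip}\in\mathbb{R}$, and associative pairwise potentials $\theta_{ij}(p,q)=-C_{ij,p}[p=q]$ with $C_{ij,p}\ge0$. Let $$L(\vec{y},\vec{\lambda})=\sum_{i\in\mathcal{V}}\sum_{p\in\mathcal{P}}\theta_{ip}y_{ip}-\sum_{\{i,j\}\in\mathcal{E}}\sum_{p\in\mathcal{P}}C_{ij,p}\,y_{ip}y_{jp}+\sum_{i\in\mathcal{V}}\lambda_i\Big(\sum_{p\in\mathcal{P}}y_{ip}-1\Big)$$ for $\vec y\in\{0,1\}^{\mathcal V\times\mathcal P}$, $\vec\lambda\in\mathbb{R}^{\mathcal V}$. Consider the following coordinate ascent algorithm started from any $\vec\lambda_0$: set $\vec\lambda:=\vec\lambda_0$; repeat the following pass until a pass makes no change: for each node $j\in\mathcal V$, compute for every $p\in\mathcal P$ the quantity $\delta^j_p=MM_{jp,0}-MM_{jp,1}$, where $MM_{jp,k}=\min\{L(\vec y,\vec\lambda):y_{jp}=k\}$ (with the current $\vec\lambda$); let $\delta^j_{(1)}$ be the largest of the $\delta^j_p$ (attained at $p^{(1)}_j$) and $\delta^j_{(2)}$ the largest over $p\ne p^{(1)}_j$; if $\delta^j_{(1)}$ and $\delta^j_{(2)}$ are of the same sign (both positive or both negative), set $\lambda_j:=\lambda_j+\tfrac12(\delta^j_{(1)}+\delta^j_{(2)})$ and mark the pass as having made a change.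 Then the point $\vec\lambda$ returned by the algorithm (upon termination) satisfies the weak agreement condition.
   Context: For $\vec\lambda\in\mathbb{R}^{\mathcal V}$, $i\in\mathcal V$, $p\in\mathcal P$, define $Z_{ip}(\vec\lambda)=\{z\in\{0,1\}:\ \exists\,\vec y^{\vec\lambda}\in\operatorname{Argmin}_{\vec y\in\{0,1\}^{\mathcal V\times\mathcal P}}L(\vec y,\vec\lambda)\text{ with }y^{\vec\lambda}_{ip}=z\}$. A point $\vec\lambda$ satisfies the weak agreement condition if for every node $i\in\mathcal V$: (1) there exists $p\in\mathcal P$ with $1\in Z_{ip}(\vec\lambda)$; and (2) for every $p\in\mathcal P$, if $Z_{ip}(\vec\lambda)=\{1\}$ then $0\in Z_{iq}(\vec\lambda)$ for all $q\ne p$. *)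

theory Defs
  imports Complex_Main
begin

text \<open>Labelings y in {0,1}^(V x P), represented as real-valued functions that are
  0/1-valued and vanish outside V x P.\<close>
definition Yset :: "'v set \<Rightarrow> 'p set \<Rightarrow> ('v \<Rightarrow> 'p \<Rightarrow> real) set" where
  "Yset V P = {y. (\<forall>i p. y i p \<in> {0, 1}) \<and> (\<forall>i p. (i \<notin> V \<or> p \<notin> P) \<longrightarrow> y i p = 0)}"

text \<open>Lagrangian L(y, lambda). An edge is an unordered pair e = {i,j}; y_ip y_jp is the
  product over i in e.\<close>
definition Lfun :: "'v set \<Rightarrow> 'p set \<Rightarrow> 'v set set \<Rightarrow> ('v \<Rightarrow> 'p \<Rightarrow> real) \<Rightarrow>
    ('v set \<Rightarrow> 'p \<Rightarrow> real) \<Rightarrow> ('v \<Rightarrow> 'p \<Rightarrow> real) \<Rightarrow> ('v \<Rightarrow> real) \<Rightarrow> real" where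
  "Lfun V P E \<theta> C y lam =
     (\<Sum>i\<in>V. \<Sum>p\<in>P. \<theta> i p * y i p)
     - (\<Sum>e\<in>E. \<Sum>p\<in>P. C e p * (\<Prod>i\<in>e. y i p))
     + (\<Sum>i\<in>V. lam i * ((\<Sum>p\<in>P. y i p) - 1))"

definition Argmin_L where
  "Argmin_L V P E \<theta> C lam =
     {y \<in> Yset V P. \<forall>y'\<in>Yset V P. Lfun V P E \<theta> C y lam \<le> Lfun V P E \<theta> C y' lam}"

definition Zset :: "'v set \<Rightarrow> 'p set \<Rightarrow> 'v set set \<Rightarrow> ('v \<Rightarrow> 'p \<Rightarrow> real) \<Rightarrow>
    ('v set \<Rightarrow> 'p \<Rightarrow> real) \<Rightarrow> ('v \<Rightarrow> real) \<Rightarrow> 'v \<Rightarrow> 'p \<Rightarrow> real set" where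
  "Zset V P E \<theta> C lam i p =
     {z \<in> {0, 1}. \<exists>y \<in> Argmin_L V P E \<theta> C lam. y i p = z}"

definition weak_agreement where
  "weak_agreement V P E \<theta> C lam \<longleftrightarrow>
     (\<forall>i\<in>V. (\<exists>p\<in>P. (1::real) \<in> Zset V P E \<theta> C lam i p) \<and>
        (\<forall>p\<in>P. Zset V P E \<theta> C lam i p = {1} \<longrightarrow>
            (\<forall>q\<in>P. q \<noteq> p \<longrightarrow> (0::real) \<in> Zset V P E \<theta> C lam i q)))"

definition MM where
  "MM V P E \<theta> C lam j p k =
     Min ((\<lambda>y. Lfun V P E \<theta> C y lam) ` {y \<in> Yset V P. y j p = k})"

definition delta where
  "delta V P E \<theta> C lam j p = MM V P E \<theta> C lam j p 0 - MM V P E \<theta> C lam j p 1"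

definition delta1 where
  "delta1 V P E \<theta> C lam j = Max (delta V P E \<theta> C lam j ` P)"

text \<open>A label attaining the largest delta (the value of delta2 does not depend on the choice).\<close>
definition p1 where
  "p1 V P E \<theta> C lam j = (SOME p. p \<in> P \<and> delta V P E \<theta> C lam j p = delta1 V P E \<theta> C lam j)"

definition delta2 where
  "delta2 V P E \<theta> C lam j = Max (delta V P E \<theta> C lam j ` (P - {p1 V P E \<theta> C lam j}))"

definition same_sign :: "real \<Rightarrow> real \<Rightarrow> bool" where
  "same_sign a b \<longleftrightarrow> (a > 0 \<and> b > 0) \<or> (a < 0 \<and> b < 0)"

text \<open>Processing node j within a pass; the boolean records whether the pass made a change.\<close>
definition node_step where
  "node_step V P E \<theta> C j st =
     (let lam = fst st; d1 = delta1 V P E \<theta> C lam j; d2 = delta2 V P E \<theta> C lam j in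
      if same_sign d1 d2 then (lam(j := lam j + (d1 + d2) / 2), True) else st)"

definition ca_pass where
  "ca_pass V P E \<theta> C js lam = fold (node_step V P E \<theta> C) js (lam, False)"

end

theory Submission
  imports Defs
begin

lemma step_mono:
  "snd st \<Longrightarrow> snd (fold (node_step V P E \<theta> C) js st)"
proof (induction js arbitrary: st)
  case Nil then show ?case by simp
next
  case (Cons a js)
  have "snd (node_step V P E \<theta> C a st)" using Cons.prems
    by (auto simp: node_step_def Let_def)
  then show ?case using Cons.IH by simp
qed

lemma pass_nochange:
  "\<not> snd (fold (node_step V P E \<theta> C) js (lam, False)) \<Longrightarrow>
   fst (fold (node_step V P E \<theta> C) js (lam, False)) = lam \<and>
   (\<forall>j\<in>set js. \<not> same_sign (delta1 V P E \<theta> C lam j) (delta2 V P E \<theta> C lam j))"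
proof (induction js)
  case Nil then show ?case by simp
next
  case (Cons a js)
  show ?case
  proof (cases "same_sign (delta1 V P E \<theta> C lam a) (delta2 V P E \<theta> C lam a)")
    case True
    then have "snd (node_step V P E \<theta> C a (lam, False))" by (simp add: node_step_def Let_def)
    then have "snd (fold (node_step V P E \<theta> C) js (node_step V P E \<theta> C a (lam, False)))"
      by (rule step_mono)
    then show ?thesis using Cons.prems by simp
  next
    case False
    then have "node_step V P E \<theta> C a (lam, False) = (lam, False)"
      by (simp add: node_step_def Let_def)
    then show ?thesis using Cons False by simp
  qed
qed

lemma Yset_finite:
  assumes "finite V" "finite P"
  shows "finite (Yset V P)"
proof -
  have "Yset V P \<subseteq> (\<lambda>S. \<lambda>i p. if (i,p) \<in> S then 1 else 0) ` Pow (V \<times> P)"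
  proof
    fix y assume y: "y \<in> Yset V P"
    let ?S = "{(i,p). i \<in> V \<and> p \<in> P \<and> y i p = 1}"
    have "y = (\<lambda>i p. if (i,p) \<in> ?S then 1 else 0)"
    proof (intro ext)
      fix i p show "y i p = (if (i,p) \<in> ?S then 1 else 0)"
        using y unfolding Yset_def by auto
    qed
    then show "y \<in> (\<lambda>S. \<lambda>i p. if (i,p) \<in> S then 1 else 0) ` Pow (V \<times> P)" by blast
  qed
  moreover have "finite (Pow (V \<times> P))" using assms by simp
  ultimately show ?thesis by (meson finite_imageI finite_subset)
qed

lemma Zset_iff:
  assumes fin: "finite V" "finite P" and j: "j \<in> V" and p: "p \<in> P" and k: "k \<in> {0,1::real}"
  shows "k \<in> Zset V P E \<theta> C lam j p \<longleftrightarrow>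
         MM V P E \<theta> C lam j p k \<le> MM V P E \<theta> C lam j p (1 - k)"
proof -
  let ?L = "\<lambda>y. Lfun V P E \<theta> C y lam"
  let ?A = "\<lambda>k. {y \<in> Yset V P. y j p = k}"
  have fy: "finite (Yset V P)" using Yset_finite fin by blast
  have ne: "?A k' \<noteq> {}" if "k' \<in> {0,1::real}" for k'
  proof -
    let ?y = "\<lambda>i q. if i = j \<and> q = p then k' else 0"
    have "?y \<in> ?A k'" using that j p unfolding Yset_def by auto
    then show ?thesis by blast
  qed
  have fA: "finite (?L ` ?A k')" for k' using fy by simp
  have k1: "1 - k \<in> {0,1::real}" using k by auto
  have yvals: "y j p = k \<or> y j p = 1 - k" if "y \<in> Yset V P" for y
  proof -
    have "y j p = 0 \<or> y j p = 1" using that unfolding Yset_def by blast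
    then show ?thesis using k by auto
  qed
  have MMle: "MM V P E \<theta> C lam j p k' \<le> ?L y" if "y \<in> ?A k'" for y k'
    unfolding MM_def using fA that by simp
  have MMin: "\<exists>y\<in>?A k'. ?L y = MM V P E \<theta> C lam j p k'" if "k' \<in> {0,1}" for k'
  proof -
    have "MM V P E \<theta> C lam j p k' \<in> ?L ` ?A k'"
      unfolding MM_def using fA ne[OF that] by (intro Min_in) auto
    then show ?thesis by force
  qed
  show ?thesis
  proof
    assume "k \<in> Zset V P E \<theta> C lam j p"
    then obtain y where y: "y \<in> Argmin_L V P E \<theta> C lam" "y j p = k"
      unfolding Zset_def by auto
    obtain y' where y': "y' \<in> ?A (1-k)" "?L y' = MM V P E \<theta> C lam j p (1-k)"
      using MMin[OF k1] by blast
    have "MM V P E \<theta> C lam j p k \<le> ?L y" using y MMle unfolding Argmin_L_def by auto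
    also have "\<dots> \<le> ?L y'" using y y' unfolding Argmin_L_def by auto
    finally show "MM V P E \<theta> C lam j p k \<le> MM V P E \<theta> C lam j p (1 - k)" using y' by simp
  next
    assume le: "MM V P E \<theta> C lam j p k \<le> MM V P E \<theta> C lam j p (1 - k)"
    obtain y where y: "y \<in> ?A k" "?L y = MM V P E \<theta> C lam j p k"
      using MMin[OF k] by blast
    have "y \<in> Argmin_L V P E \<theta> C lam"
      unfolding Argmin_L_def
    proof (intro CollectI conjI ballI)
      show "y \<in> Yset V P" using y by simp
      fix y' assume y': "y' \<in> Yset V P"
      show "?L y \<le> ?L y'"
        using yvals[OF y'] proof
        assume "y' j p = k" then show ?thesis using y y' MMle[of y' k] by simp
      next
        assume "y' j p = 1 - k" then show ?thesis using y y' MMle[of y' "1-k"] le by simp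
      qed
    qed
    then show "k \<in> Zset V P E \<theta> C lam j p" unfolding Zset_def using y k by auto
  qed
qed

lemma wa_of_nochange:
  assumes fin: "finite V" "finite P" and cP: "card P \<ge> 2"
    and nc: "\<forall>j\<in>V. \<not> same_sign (delta1 V P E \<theta> C lam j) (delta2 V P E \<theta> C lam j)"
  shows "weak_agreement V P E \<theta> C lam"
  unfolding weak_agreement_def
proof (intro ballI conjI impI)
  fix i assume i: "i \<in> V"
  define d where "d = delta V P E \<theta> C lam i"
  define d1 where "d1 = delta1 V P E \<theta> C lam i"
  define d2 where "d2 = delta2 V P E \<theta> C lam i"
  define q1 where "q1 = p1 V P E \<theta> C lam i"
  have one: "1 \<in> Zset V P E \<theta> C lam i p \<longleftrightarrow> d p \<ge> 0" if "p \<in> P" for p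
    using Zset_iff[OF fin i that, of 1] unfolding delta_def d_def by simp
  have zero: "0 \<in> Zset V P E \<theta> C lam i p \<longleftrightarrow> d p \<le> 0" if "p \<in> P" for p
    using Zset_iff[OF fin i that, of 0] unfolding delta_def d_def by simp
  have Pne: "P \<noteq> {}" using cP by auto
  have d1e: "d1 = Max (d ` P)" unfolding d1_def d_def delta1_def by simp
  have "d1 \<in> d ` P" unfolding d1e using fin Pne by (intro Max_in) auto
  then have "\<exists>p. p \<in> P \<and> d p = d1" by blast
  then have p1: "q1 \<in> P \<and> d q1 = d1" unfolding q1_def p1_def d_def d1_def by (rule someI_ex)
  have le1: "d q \<le> d1" if "q \<in> P" for q unfolding d1e using fin that by (intro Max_ge) auto
  have d2e: "d2 = Max (d ` (P - {q1}))" unfolding d2_def d_def delta2_def q1_def by simp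
  have "P - {q1} \<noteq> {}"
  proof
    assume "P - {q1} = {}"
    then have "P \<subseteq> {q1}" by blast
    then have "card P \<le> card {q1}" by (intro card_mono) simp_all
    then show False using cP by simp
  qed
  then have "d2 \<in> d ` (P - {q1})" unfolding d2e using fin by (intro Max_in) auto
  then have d21: "d2 \<le> d1" using le1 by blast
  have le2: "d q \<le> d2" if "q \<in> P" "q \<noteq> q1" for q
    unfolding d2e using fin that by (intro Max_ge) auto
  have ns: "\<not> same_sign d1 d2" using nc i unfolding d1_def d2_def by blast
  then have s: "d1 \<ge> 0" "d2 \<le> 0" using d21 unfolding same_sign_def by auto
  show "\<exists>p\<in>P. 1 \<in> Zset V P E \<theta> C lam i p"
  proof
    show "q1 \<in> P" using p1 by blast
    show "1 \<in> Zset V P E \<theta> C lam i q1" using one[of q1] p1 s by simp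
  qed
  fix p assume pP: "p \<in> P" and Z: "Zset V P E \<theta> C lam i p = {1}"
  have "0 \<notin> Zset V P E \<theta> C lam i p" using Z by simp
  then have dp: "d p > 0" using zero[OF pP] by linarith
  have pp1: "p = q1"
  proof (rule ccontr)
    assume "p \<noteq> q1" then have "d p \<le> d2" using le2 pP by blast
    then show False using dp s by linarith
  qed
  fix q assume qP: "q \<in> P" and qp: "q \<noteq> p"
  have "d q \<le> d2" using le2 qP qp pp1 by blast
  then show "0 \<in> Zset V P E \<theta> C lam i q" using zero[OF qP] s by linarith
qed

theorem theorem3:
  fixes V :: "'v set" and P :: "'p set" and E :: "'v set set"
    and \<theta> :: "'v \<Rightarrow> 'p \<Rightarrow> real" and C :: "'v set \<Rightarrow> 'p \<Rightarrow> real"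
    and lam0 :: "'v \<Rightarrow> real" and js :: "'v list" and n :: nat
  assumes "finite V" and "finite P" and "card P \<ge> 2"
    and "\<forall>e\<in>E. \<exists>i j. i \<in> V \<and> j \<in> V \<and> i \<noteq> j \<and> e = {i, j}"
    and "\<forall>e\<in>E. \<forall>p\<in>P. C e p \<ge> 0"
    and "distinct js" and "set js = V"
    and "\<forall>m<n. snd (ca_pass V P E \<theta> C js (((fst \<circ> ca_pass V P E \<theta> C js) ^^ m) lam0))"
    and "\<not> snd (ca_pass V P E \<theta> C js (((fst \<circ> ca_pass V P E \<theta> C js) ^^ n) lam0))"
  shows "weak_agreement V P E \<theta> C
           (fst (ca_pass V P E \<theta> C js (((fst \<circ> ca_pass V P E \<theta> C js) ^^ n) lam0)))"
proof -
  define lam where "lam = ((fst \<circ> ca_pass V P E \<theta> C js) ^^ n) lam0"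
  have h: "\<not> snd (fold (node_step V P E \<theta> C) js (lam, False))"
    using assms(9) unfolding lam_def ca_pass_def by simp
  note pn = pass_nochange[OF h]
  have "weak_agreement V P E \<theta> C lam"
    using wa_of_nochange[OF assms(1,2,3)] pn assms(7) by blast
  then show ?thesis using pn unfolding lam_def ca_pass_def by simp
qed

end
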